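(* Every 5-basket is $(2P_3,C_4,C_6,C_7,T_0)$-free and contains an induced 3-pentagon. Moreover, every 5-basket is anticonnected and contains no simplicial and no universal vertices.
   Context: Graphs are finite, simple, nonnull. A graph is $(H_1,\dots,H_m)$-free if it has no induced subgraph isomorphic to any $H_i$. $P_k$, $C_k$ are the path and cycle on $k$ vertices; $2P_3$ is two disjoint copies of $P_3$. $T_0$ is the graph with vertices $p,q,u_0,u_1,u_2,u_3,w_1,w_2,w_3$ and edges $pq,pu_0,pu_2,pu_3,qu_1,qu_2,qu_3,u_0w_1,u_1w_1,u_2w_2,u_3w_3,w_1w_2,w_1w_3,w_2w_3$. The 3-pentagon is the graph on vertices $a,b_1,b_2,b_3,c_1,c_2,c_3$ where $a$ is adjacent to each $b_i$ and to no $c_i$, $\{b_1,b_2,b_3\}$ is stable, $\{c_1,c_2,c_3\}$ is a clique, and $b_ic_j$ is an edge iff $i=j$. A graph is anticonnected if its complement is connected. A vertex is simplicial if its neighbours form a (possibly empty) clique, universal if adjacent to all other vertices. For disjoint vertex sets $X,Y$, $X$ is complete (anticomplete) to $Y$ if every vertex of $X$ is adjacent (nonadjacent) to every vertex of $Y$. A 5-basket is a graph $Q$ whose vertex set partitions into $A,B_1,B_2,B_3,C_1,C_2,C_3,F$ where $A,B_i,C_i$ are nonempty cliques, $F$ is a possibly empty clique, $B_1,B_2,B_3$ are pairwise anticomplete, $C_1,C_2,C_3$ are pairwise complete; there is $i^*\in\{1,2,3\}$ such that $A$ is complete to $(B_1\cup B_2\cup B_3)\setminus B_{i^*}$ and $A$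 can be ordered $a_1,\dots,a_t$ with $N(a_t)\cap B_{i^*}\subseteq\cdots\subseteq N(a_1)\cap B_{i^*}=B_{i^*}$; $A$ is anticomplete to $C_1\cup C_2\cup C_3$; each $B_i$ is complete to $C_i$ and anticomplete to $C_j$ for $j\ne i$; and there is $j^*$ such that $F$ is complete to $V(Q)\setminus(B_{j^*}\cup C_{j^*}\cup F)$ and anticomplete to $B_{j^*}\cup C_{j^*}$. *)

theory Defs
  imports Main
begin

definition graph :: "'a set \<Rightarrow> ('a \<Rightarrow> 'a \<Rightarrow> bool) \<Rightarrow> bool" where
  "graph V E \<longleftrightarrow> finite V \<and> V \<noteq> {} \<and> (\<forall>x y. E x y \<longrightarrow> x \<in> V \<and> y \<in> V)
     \<and> (\<forall>x y. E x y \<longrightarrow> E y x) \<and> (\<forall>x. \<not> E x x)"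

definition has_induced :: "'b set \<Rightarrow> ('b \<Rightarrow> 'b \<Rightarrow> bool) \<Rightarrow> 'a set \<Rightarrow> ('a \<Rightarrow> 'a \<Rightarrow> bool) \<Rightarrow> bool" where
  "has_induced VH EH V E \<longleftrightarrow>
     (\<exists>f. inj_on f VH \<and> f ` VH \<subseteq> V \<and> (\<forall>x\<in>VH. \<forall>y\<in>VH. E (f x) (f y) \<longleftrightarrow> EH x y))"

definition sym_edges :: "(nat \<times> nat) list \<Rightarrow> nat \<Rightarrow> nat \<Rightarrow> bool" where
  "sym_edges L x y \<longleftrightarrow> (x, y) \<in> set L \<or> (y, x) \<in> set L"

definition cycle_V :: "nat \<Rightarrow> nat set" where "cycle_V k = {0..<k}"
definition cycle_E :: "nat \<Rightarrow> nat \<Rightarrow> nat \<Rightarrow> bool" where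
  "cycle_E k x y \<longleftrightarrow> x < k \<and> y < k \<and> (y = (x + 1) mod k \<or> x = (y + 1) mod k)"

definition twoP3_V :: "nat set" where "twoP3_V = {0..<6}"
definition twoP3_E :: "nat \<Rightarrow> nat \<Rightarrow> bool" where
  "twoP3_E = sym_edges [(0,1),(1,2),(3,4),(4,5)]"

text \<open>T_0 with p=0, q=1, u0=2, u1=3, u2=4, u3=5, w1=6, w2=7, w3=8.\<close>
definition T0_V :: "nat set" where "T0_V = {0..<9}"
definition T0_E :: "nat \<Rightarrow> nat \<Rightarrow> bool" where
  "T0_E = sym_edges [(0,1),(0,2),(0,4),(0,5),(1,3),(1,4),(1,5),
                     (2,6),(3,6),(4,7),(5,8),(6,7),(6,8),(7,8)]"

text \<open>3-pentagon with a=0, b1=1, b2=2, b3=3, c1=4, c2=5, c3=6.\<close>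
definition pent3_V :: "nat set" where "pent3_V = {0..<7}"
definition pent3_E :: "nat \<Rightarrow> nat \<Rightarrow> bool" where
  "pent3_E = sym_edges [(0,1),(0,2),(0,3),(4,5),(4,6),(5,6),(1,4),(2,5),(3,6)]"

definition connected_graph :: "'a set \<Rightarrow> ('a \<Rightarrow> 'a \<Rightarrow> bool) \<Rightarrow> bool" where
  "connected_graph V E \<longleftrightarrow>
     (\<forall>x\<in>V. \<forall>y\<in>V. (x, y) \<in> {(a, b). a \<in> V \<and> b \<in> V \<and> E a b}\<^sup>*)"

definition complement :: "'a set \<Rightarrow> ('a \<Rightarrow> 'a \<Rightarrow> bool) \<Rightarrow> 'a \<Rightarrow> 'a \<Rightarrow> bool" where
  "complement V E x y \<longleftrightarrow> x \<in> V \<and> y \<in> V \<and> x \<noteq> y \<and> \<not> E x y"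

definition anticonnected :: "'a set \<Rightarrow> ('a \<Rightarrow> 'a \<Rightarrow> bool) \<Rightarrow> bool" where
  "anticonnected V E \<longleftrightarrow> connected_graph V (complement V E)"

definition simplicial :: "'a set \<Rightarrow> ('a \<Rightarrow> 'a \<Rightarrow> bool) \<Rightarrow> 'a \<Rightarrow> bool" where
  "simplicial V E v \<longleftrightarrow> v \<in> V \<and> (\<forall>x y. E v x \<and> E v y \<and> x \<noteq> y \<longrightarrow> E x y)"

definition universal :: "'a set \<Rightarrow> ('a \<Rightarrow> 'a \<Rightarrow> bool) \<Rightarrow> 'a \<Rightarrow> bool" where
  "universal V E v \<longleftrightarrow> v \<in> V \<and> (\<forall>u\<in>V. u \<noteq> v \<longrightarrow> E v u)"

definition clique :: "'a set \<Rightarrow> ('a \<Rightarrow> 'a \<Rightarrow> bool) \<Rightarrow> 'a set \<Rightarrow> bool" where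
  "clique V E X \<longleftrightarrow> X \<subseteq> V \<and> (\<forall>x\<in>X. \<forall>y\<in>X. x \<noteq> y \<longrightarrow> E x y)"

definition complete_to :: "('a \<Rightarrow> 'a \<Rightarrow> bool) \<Rightarrow> 'a set \<Rightarrow> 'a set \<Rightarrow> bool" where
  "complete_to E X Y \<longleftrightarrow> (\<forall>x\<in>X. \<forall>y\<in>Y. E x y)"

definition anticomplete_to :: "('a \<Rightarrow> 'a \<Rightarrow> bool) \<Rightarrow> 'a set \<Rightarrow> 'a set \<Rightarrow> bool" where
  "anticomplete_to E X Y \<longleftrightarrow> (\<forall>x\<in>X. \<forall>y\<in>Y. \<not> E x y)"

definition nbhd :: "('a \<Rightarrow> 'a \<Rightarrow> bool) \<Rightarrow> 'a \<Rightarrow> 'a set" where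
  "nbhd E v = {u. E v u}"

definition five_basket :: "'a set \<Rightarrow> ('a \<Rightarrow> 'a \<Rightarrow> bool) \<Rightarrow> bool" where
  "five_basket V E \<longleftrightarrow>
   (\<exists>A B C F istar jstar.
      (let L = [A, B 1, B 2, B 3, C 1, C 2, C 3, F] in
        \<Union>(set L) = V \<and> (\<forall>i<8. \<forall>j<8. i \<noteq> j \<longrightarrow> L ! i \<inter> L ! j = {}))
    \<and> A \<noteq> {} \<and> clique V E A
    \<and> (\<forall>i\<in>{1,2,3::nat}. B i \<noteq> {} \<and> clique V E (B i) \<and> C i \<noteq> {} \<and> clique V E (C i))
    \<and> clique V E F
    \<and> (\<forall>i\<in>{1,2,3::nat}. \<forall>j\<in>{1,2,3}. i \<noteq> j \<longrightarrow>
          anticomplete_to E (B i) (B j) \<and> complete_to E (C i) (C j))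
    \<and> istar \<in> {1,2,3::nat}
    \<and> (\<forall>i\<in>{1,2,3::nat}. i \<noteq> istar \<longrightarrow> complete_to E A (B i))
    \<and> (\<exists>as. distinct as \<and> set as = A
           \<and> nbhd E (as ! 0) \<inter> B istar = B istar
           \<and> (\<forall>k. Suc k < length as \<longrightarrow>
                 nbhd E (as ! Suc k) \<inter> B istar \<subseteq> nbhd E (as ! k) \<inter> B istar))
    \<and> (\<forall>i\<in>{1,2,3::nat}. anticomplete_to E A (C i))
    \<and> (\<forall>i\<in>{1,2,3::nat}. complete_to E (B i) (C i)
          \<and> (\<forall>j\<in>{1,2,3::nat}. j \<noteq> i \<longrightarrow> anticomplete_to E (B i) (C j)))
    \<and> jstar \<in> {1,2,3::nat}
    \<and> complete_to E F (V - (B jstar \<union> C jstar \<union> F))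
    \<and> anticomplete_to E F (B jstar \<union> C jstar))"

end

theory Submission
  imports Defs
begin

definition cadj0 :: "nat \<Rightarrow> nat \<Rightarrow> nat \<Rightarrow> nat \<Rightarrow> bool option" where
 "cadj0 i j c d =
  (if c = 0 then (if d \<le> 3 then (if d = i then None else Some True) else if d \<le> 6 then Some False else Some True)
   else if c \<le> 3 then (if d \<le> 3 then Some False else if d \<le> 6 then Some (d = c+3) else Some (c \<noteq> j))
   else if c \<le> 6 then (if d \<le> 6 then Some True else Some (c \<noteq> j+3))
   else Some True)"

definition cadj :: "nat \<Rightarrow> nat \<Rightarrow> nat \<Rightarrow> nat \<Rightarrow> bool option" where
 "cadj i j c d = (if c = d then Some True else if d < c then cadj0 i j d c else cadj0 i j c d)"

fun okn :: "nat \<Rightarrow> nat \<Rightarrow> (nat \<Rightarrow> nat \<Rightarrow> bool) \<Rightarrow> nat \<Rightarrow> nat \<Rightarrow> nat list \<Rightarrow> nat \<Rightarrow> bool" where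
  "okn i j EH k c [] x = True"
| "okn i j EH k c (d # ds) x = ((case cadj i j d c of None \<Rightarrow> True | Some b \<Rightarrow> EH x k = b) \<and> okn i j EH k c ds (Suc x))"

definition final_ok :: "nat \<Rightarrow> (nat \<Rightarrow> nat \<Rightarrow> bool) \<Rightarrow> nat list \<Rightarrow> bool" where
 "final_ok i EH cs = list_all (\<lambda>x. list_all (\<lambda>x'. list_all (\<lambda>y. list_all (\<lambda>y'. 
     \<not> (cs!x = 0 \<and> cs!x' = 0 \<and> cs!y = i \<and> cs!y' = i \<and> EH x y \<and> EH x' y' \<and> \<not> EH x y' \<and> \<not> EH x' y)) [0..<length cs]) [0..<length cs]) [0..<length cs]) [0..<length cs]"

function (sequential) srch :: "nat \<Rightarrow> nat \<Rightarrow> (nat \<Rightarrow> nat \<Rightarrow> bool) \<Rightarrow> nat \<Rightarrow> nat list \<Rightarrow> nat list \<Rightarrow> bool" where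
  "srch i j EH 0 cs cands = final_ok i EH cs"
| "srch i j EH (Suc m) cs [] = False"
| "srch i j EH (Suc m) cs (c # rest) = ((if okn i j EH (length cs) c cs 0 then srch i j EH m (cs @ [c]) [0,1,2,3,4,5,6,7] else False) \<or> srch i j EH (Suc m) cs rest)"
  by pat_completeness auto
termination by (relation "measures [\<lambda>(i,j,EH,m,cs,cands). m, \<lambda>(i,j,EH,m,cs,cands). length cands]") auto

lemma srch_num: "srch i j EH (numeral w) cs (c # rest) = ((if okn i j EH (length cs) c cs 0 then srch i j EH (pred_numeral w) (cs @ [c]) [0,1,2,3,4,5,6,7] else False) \<or> srch i j EH (numeral w) cs rest)"
  "srch i j EH (numeral w) cs [] = False"
  by (simp_all add: numeral_eq_Suc)

lemma comp_2P3: "\<not> srch 1 1 (twoP3_E) 6 [] [0,1,2,3,4,5,6,7] \<and> \<not> srch 1 2 (twoP3_E) 6 [] [0,1,2,3,4,5,6,7]"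
  by code_simp

lemma comp_C4: "\<not> srch 1 1 (cycle_E 4) 4 [] [0,1,2,3,4,5,6,7] \<and> \<not> srch 1 2 (cycle_E 4) 4 [] [0,1,2,3,4,5,6,7]"
  by code_simp

lemma comp_C6: "\<not> srch 1 1 (cycle_E 6) 6 [] [0,1,2,3,4,5,6,7] \<and> \<not> srch 1 2 (cycle_E 6) 6 [] [0,1,2,3,4,5,6,7]"
  by code_simp

lemma comp_C7: "\<not> srch 1 1 (cycle_E 7) 7 [] [0,1,2,3,4,5,6,7] \<and> \<not> srch 1 2 (cycle_E 7) 7 [] [0,1,2,3,4,5,6,7]"
  by code_simp

lemma comp_T0: "\<not> srch 1 1 (T0_E) 9 [] [0,1,2,3,4,5,6,7] \<and> \<not> srch 1 2 (T0_E) 9 [] [0,1,2,3,4,5,6,7]"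
  by code_simp

lemma okn_intro:
  "(\<forall>t<length ds. (case cadj i j (ds!t) c of None \<Rightarrow> True | Some b \<Rightarrow> EH (x+t) k = b)) \<Longrightarrow> okn i j EH k c ds x"
proof (induction ds arbitrary: x)
  case Nil then show ?case by simp
next
  case (Cons d ds)
  have "\<forall>t<length ds. (case cadj i j (ds!t) c of None \<Rightarrow> True | Some b \<Rightarrow> EH (Suc x+t) k = b)"
  proof (intro allI impI)
    fix t assume "t < length ds"
    then show "(case cadj i j (ds!t) c of None \<Rightarrow> True | Some b \<Rightarrow> EH (Suc x+t) k = b)"
      using Cons.prems[rule_format, of "Suc t"] by (simp split: option.splits)
  qed
  then have "okn i j EH k c ds (Suc x)" using Cons.IH by blast
  moreover have "(case cadj i j d c of None \<Rightarrow> True | Some b \<Rightarrow> EH x k = b)"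
    using Cons.prems[rule_format, of 0] by (simp split: option.splits)
  ultimately show ?case by simp
qed

lemma srch_cands:
  "c \<in> set cands \<Longrightarrow> okn i j EH (length cs) c cs 0 \<Longrightarrow> srch i j EH m (cs @ [c]) [0,1,2,3,4,5,6,7]
   \<Longrightarrow> srch i j EH (Suc m) cs cands"
  by (induction cands) auto

lemma srch_sound:
  assumes P1: "\<forall>x<n. g x < 8"
    and P2: "\<forall>x k b. x < k \<longrightarrow> k < n \<longrightarrow> cadj i j (g x) (g k) = Some b \<longrightarrow> EH x k = b"
    and P3: "\<forall>x x' y y'. x < n \<longrightarrow> x' < n \<longrightarrow> y < n \<longrightarrow> y' < n \<longrightarrow>
        \<not> (g x = 0 \<and> g x' = 0 \<and> g y = i \<and> g y' = i \<and> EH x y \<and> EH x' y' \<and> \<not> EH x y' \<and> \<not> EH x' y)"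
  shows "srch i j EH n [] [0,1,2,3,4,5,6,7]"
proof -
  have "\<forall>cs. length cs + m = n \<longrightarrow> (\<forall>x<length cs. cs ! x = g x) \<longrightarrow> srch i j EH m cs [0,1,2,3,4,5,6,7]" for m
  proof (induction m)
    case 0
    show ?case
    proof (intro allI impI)
      fix cs :: "nat list" assume a: "length cs + 0 = n" "\<forall>x<length cs. cs ! x = g x"
      show "srch i j EH 0 cs [0,1,2,3,4,5,6,7]"
        using P3 a by (simp add: final_ok_def list_all_iff)
    qed
  next
    case (Suc m)
    show ?case
    proof (intro allI impI)
      fix cs :: "nat list" assume a: "length cs + Suc m = n" "\<forall>x<length cs. cs ! x = g x"
      define c where "c = g (length cs)"
      have cin: "c \<in> set [0,1,2,3,4,5,6,7]"
      proof -
        have "c < 8" using P1 a(1) c_def by simp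
        then show ?thesis by (auto simp: eval_nat_numeral less_Suc_eq)
      qed
      have ok: "okn i j EH (length cs) c cs 0"
        apply (rule okn_intro)
        using P2 a c_def by (auto split: option.split)
      have "\<forall>x<length (cs @ [c]). (cs @ [c]) ! x = g x" using a(2) c_def by (auto simp: nth_append less_Suc_eq)
      then have "srch i j EH m (cs @ [c]) [0,1,2,3,4,5,6,7]" using Suc.IH a(1) by simp
      then show "srch i j EH (Suc m) cs [0,1,2,3,4,5,6,7]" using srch_cands[OF cin ok] by blast
    qed
  qed
  then show ?thesis by simp
qed

lemma no_induced_generic:
  assumes H1: "\<forall>u\<in>V. cl u < (8::nat)"
    and H2: "\<forall>u\<in>V. \<forall>v\<in>V. \<forall>b. u \<noteq> v \<longrightarrow> cadj i j (cl u) (cl v) = Some b \<longrightarrow> E u v = b"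
    and H3: "\<forall>a\<in>V. \<forall>a'\<in>V. \<forall>b\<in>V. \<forall>b'\<in>V. cl a = 0 \<longrightarrow> cl a' = 0 \<longrightarrow> cl b = i \<longrightarrow> cl b' = i \<longrightarrow>
               \<not> (E a b \<and> E a' b' \<and> \<not> E a b' \<and> \<not> E a' b)"
    and H4: "\<not> srch i j EH n [] [0,1,2,3,4,5,6,7]"
  shows "\<not> has_induced {0..<n} EH V E"
proof
  assume "has_induced {0..<n} EH V E"
  then obtain f where inj: "inj_on f {0..<n}" and sub: "f ` {0..<n} \<subseteq> V"
    and ind: "\<forall>x\<in>{0..<n}. \<forall>y\<in>{0..<n}. E (f x) (f y) \<longleftrightarrow> EH x y"
    unfolding has_induced_def by blast
  have fV: "\<And>x. x < n \<Longrightarrow> f x \<in> V" using sub by auto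
  have "srch i j EH n [] [0,1,2,3,4,5,6,7]"
  proof (rule srch_sound[where g = "\<lambda>x. cl (f x)"])
    show "\<forall>x<n. cl (f x) < 8" using H1 fV by auto
    show "\<forall>x k b. x < k \<longrightarrow> k < n \<longrightarrow> cadj i j (cl (f x)) (cl (f k)) = Some b \<longrightarrow> EH x k = b"
    proof (intro allI impI)
      fix x k b assume "x < k" "k < n" "cadj i j (cl (f x)) (cl (f k)) = Some b"
      moreover have xn: "x < n" using \<open>x < k\<close> \<open>k < n\<close> by simp
      moreover have "f x \<noteq> f k" using inj \<open>x < k\<close> \<open>k < n\<close> xn unfolding inj_on_def by force
      ultimately have "E (f x) (f k) = b" using H2 fV \<open>k < n\<close> by blast
      then show "EH x k = b" using ind xn \<open>k < n\<close> by simp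
    qed
    show "\<forall>x x' y y'. x < n \<longrightarrow> x' < n \<longrightarrow> y < n \<longrightarrow> y' < n \<longrightarrow>
        \<not> (cl (f x) = 0 \<and> cl (f x') = 0 \<and> cl (f y) = i \<and> cl (f y') = i \<and> EH x y \<and> EH x' y' \<and> \<not> EH x y' \<and> \<not> EH x' y)"
    proof (intro allI impI)
      fix x x' y y' assume "x < n" "x' < n" "y < n" "y' < n"
      then show "\<not> (cl (f x) = 0 \<and> cl (f x') = 0 \<and> cl (f y) = i \<and> cl (f y') = i \<and> EH x y \<and> EH x' y' \<and> \<not> EH x y' \<and> \<not> EH x' y)"
        using H3[rule_format, OF fV fV fV fV, of x x' y y'] ind by auto
    qed
  qed
  with H4 show False by (rule notE)
qed


definition permtab :: "nat \<Rightarrow> nat \<Rightarrow> nat list" where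
  "permtab i j = (if i = 1 then (if j = 3 then [1,3,2] else [1,2,3])
     else if i = 2 then (if j = 3 then [3,1,2] else [2,1,3])
     else (if j = 1 then [2,3,1] else [3,2,1]))"

definition permc :: "nat \<Rightarrow> nat \<Rightarrow> nat \<Rightarrow> nat" where
  "permc i j c = (if c = 0 then 0 else if c \<le> 3 then permtab i j ! (c - 1)
     else if c \<le> 6 then permtab i j ! (c - 4) + 3 else 7)"

lemma perm_facts_aux: "list_all (\<lambda>i. list_all (\<lambda>j. list_all (\<lambda>c. permc i j c < 8 \<and> (permc i j c = 0 \<longleftrightarrow> c = 0)
   \<and> (permc i j c = 1 \<longleftrightarrow> c = i) \<and> list_all (\<lambda>d. cadj 1 (if i = j then 1 else 2) (permc i j c) (permc i j d) = cadj i j c d)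
    [0..<8]) [0..<8]) [1,2,3]) [1,2,3]"
  by code_simp

lemma perm_facts:
  assumes "i \<in> {1,2,3}" "j \<in> {1,2,3}" "c < 8"
  shows "permc i j c < 8" "permc i j c = 0 \<longleftrightarrow> c = 0" "permc i j c = 1 \<longleftrightarrow> c = i"
    "\<And>d. d < 8 \<Longrightarrow> cadj 1 (if i = j then 1 else 2) (permc i j c) (permc i j d) = cadj i j c d"
proof -
  have s1: "set [1,2,3::nat] = {1,2,3}" by simp
  have s2: "set [0..<8::nat] = {0..<8}" by simp
  have F: "\<forall>i\<in>{1,2,3}. \<forall>j\<in>{1,2,3}. \<forall>c\<in>{0..<8}. permc i j c < 8 \<and> (permc i j c = 0 \<longleftrightarrow> c = 0)
   \<and> (permc i j c = 1 \<longleftrightarrow> c = i) \<and> (\<forall>d\<in>{0..<8}. cadj 1 (if i = j then 1 else 2) (permc i j c) (permc i j d) = cadj i j c d)"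
    using perm_facts_aux unfolding list_all_iff s1 s2 .
  have c8: "c \<in> {0..<8}" using assms(3) by simp
  have G: "permc i j c < 8 \<and> (permc i j c = 0 \<longleftrightarrow> c = 0)
   \<and> (permc i j c = 1 \<longleftrightarrow> c = i) \<and> (\<forall>d\<in>{0..<8}. cadj 1 (if i = j then 1 else 2) (permc i j c) (permc i j d) = cadj i j c d)"
    using bspec[OF bspec[OF bspec[OF F assms(1)] assms(2)] c8] .
  show "permc i j c < 8" "permc i j c = 0 \<longleftrightarrow> c = 0" "permc i j c = 1 \<longleftrightarrow> c = i"
    using G by (rule conjunct1, rule conjunct1[OF conjunct2], rule conjunct1[OF conjunct2[OF conjunct2]])
  show "\<And>d. d < 8 \<Longrightarrow> cadj 1 (if i = j then 1 else 2) (permc i j c) (permc i j d) = cadj i j c d"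
  proof -
    fix d :: nat assume "d < 8"
    then have d8: "d \<in> {0..<8}" by simp
    have "\<forall>d\<in>{0..<8}. cadj 1 (if i = j then 1 else 2) (permc i j c) (permc i j d) = cadj i j c d"
      using G by (rule conjunct2[OF conjunct2[OF conjunct2]])
    then show "cadj 1 (if i = j then 1 else 2) (permc i j c) (permc i j d) = cadj i j c d"
      using d8 by (rule bspec)
  qed
qed

lemma no_induced_sym:
  assumes ij: "i \<in> {1,2,3}" "j \<in> {1,2,3}"
    and H1: "\<forall>u\<in>V. cl u < (8::nat)"
    and H2: "\<forall>u\<in>V. \<forall>v\<in>V. \<forall>b. u \<noteq> v \<longrightarrow> cadj i j (cl u) (cl v) = Some b \<longrightarrow> E u v = b"
    and H3: "\<forall>a\<in>V. \<forall>a'\<in>V. \<forall>b\<in>V. \<forall>b'\<in>V. cl a = 0 \<longrightarrow> cl a' = 0 \<longrightarrow> cl b = i \<longrightarrow> cl b' = i \<longrightarrow>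
               \<not> (E a b \<and> E a' b' \<and> \<not> E a b' \<and> \<not> E a' b)"
    and H4: "\<not> srch 1 1 EH n [] [0,1,2,3,4,5,6,7] \<and> \<not> srch 1 2 EH n [] [0,1,2,3,4,5,6,7]"
  shows "\<not> has_induced {0..<n} EH V E"
proof (rule no_induced_generic[where cl = "\<lambda>u. permc i j (cl u)" and i = 1 and j = "if i = j then 1 else 2"])
  show "\<forall>u\<in>V. permc i j (cl u) < 8"
  proof
    fix u assume "u \<in> V" then show "permc i j (cl u) < 8" using H1 perm_facts(1)[OF ij] by blast
  qed
  show "\<forall>u\<in>V. \<forall>v\<in>V. \<forall>b. u \<noteq> v \<longrightarrow> cadj 1 (if i = j then 1 else 2) (permc i j (cl u)) (permc i j (cl v)) = Some b \<longrightarrow> E u v = b"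
  proof (intro ballI allI impI)
    fix u v b assume uv: "u \<in> V" "v \<in> V" "u \<noteq> v" and c: "cadj 1 (if i = j then 1 else 2) (permc i j (cl u)) (permc i j (cl v)) = Some b"
    have "cadj 1 (if i = j then 1 else 2) (permc i j (cl u)) (permc i j (cl v)) = cadj i j (cl u) (cl v)"
      using perm_facts(4)[OF ij] H1 uv by blast
    then show "E u v = b" using H2 uv c by simp
  qed
  show "\<forall>a\<in>V. \<forall>a'\<in>V. \<forall>b\<in>V. \<forall>b'\<in>V. permc i j (cl a) = 0 \<longrightarrow> permc i j (cl a') = 0 \<longrightarrow> permc i j (cl b) = 1 \<longrightarrow> permc i j (cl b') = 1 \<longrightarrow>
               \<not> (E a b \<and> E a' b' \<and> \<not> E a b' \<and> \<not> E a' b)"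
  proof (intro ballI impI)
    fix a a' b b' assume V4: "a \<in> V" "a' \<in> V" "b \<in> V" "b' \<in> V"
      and p: "permc i j (cl a) = 0" "permc i j (cl a') = 0" "permc i j (cl b) = 1" "permc i j (cl b') = 1"
    have "cl a = 0" "cl a' = 0" "cl b = i" "cl b' = i"
      using p perm_facts(2,3)[OF ij] H1 V4 by blast+
    then show "\<not> (E a b \<and> E a' b' \<and> \<not> E a b' \<and> \<not> E a' b)" using H3 V4 by blast
  qed
  show "\<not> srch 1 (if i = j then 1 else 2) EH n [] [0,1,2,3,4,5,6,7]"
  proof (cases "i = j")
    case True
    have e: "(if i = j then 1 else 2) = (1::nat)" using True by (rule if_P)
    show ?thesis using H4 unfolding e by (rule conjunct1)
  next
    case False
    have e: "(if i = j then 1 else 2) = (2::nat)" using False by (rule if_not_P)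
    show ?thesis using H4 unfolding e by (rule conjunct2)
  qed
qed

theorem proposition5p2:
  fixes V :: "'a set" and E :: "'a \<Rightarrow> 'a \<Rightarrow> bool"
  assumes "graph V E" and "five_basket V E"
  shows "\<not> has_induced twoP3_V twoP3_E V E
       \<and> \<not> has_induced (cycle_V 4) (cycle_E 4) V E
       \<and> \<not> has_induced (cycle_V 6) (cycle_E 6) V E
       \<and> \<not> has_induced (cycle_V 7) (cycle_E 7) V E
       \<and> \<not> has_induced T0_V T0_E V E
       \<and> has_induced pent3_V pent3_E V E
       \<and> anticonnected V E
       \<and> (\<forall>v\<in>V. \<not> simplicial V E v \<and> \<not> universal V E v)"
proof -
  have symE: "\<And>x y. E x y \<Longrightarrow> E y x" and irr: "\<And>x. \<not> E x x"
    and EV: "\<And>x y. E x y \<Longrightarrow> x \<in> V \<and> y \<in> V"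
    using assms(1) unfolding graph_def by auto
  obtain A B C F istar jstar as where
    part: "\<Union>(set [A, B 1, B 2, B 3, C 1, C 2, C 3, F]) = V"
    and disj: "\<forall>i<8. \<forall>j<8. i \<noteq> j \<longrightarrow> [A, B 1, B 2, B 3, C 1, C 2, C 3, F] ! i \<inter> [A, B 1, B 2, B 3, C 1, C 2, C 3, F] ! j = {}"
    and An: "A \<noteq> {}" and Acl: "clique V E A"
    and BCn: "\<forall>i\<in>{1,2,3::nat}. B i \<noteq> {} \<and> clique V E (B i) \<and> C i \<noteq> {} \<and> clique V E (C i)"
    and Fcl: "clique V E F"
    and BBCC: "\<forall>i\<in>{1,2,3::nat}. \<forall>j\<in>{1,2,3}. i \<noteq> j \<longrightarrow>
          anticomplete_to E (B i) (B j) \<and> complete_to E (C i) (C j)"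
    and ist: "istar \<in> {1,2,3::nat}"
    and ABc: "\<forall>i\<in>{1,2,3::nat}. i \<noteq> istar \<longrightarrow> complete_to E A (B i)"
    and asd: "distinct as" and asA: "set as = A"
    and as0: "nbhd E (as ! 0) \<inter> B istar = B istar"
    and asm: "\<forall>k. Suc k < length as \<longrightarrow> nbhd E (as ! Suc k) \<inter> B istar \<subseteq> nbhd E (as ! k) \<inter> B istar"
    and ACa: "\<forall>i\<in>{1,2,3::nat}. anticomplete_to E A (C i)"
    and BCx: "\<forall>i\<in>{1,2,3::nat}. complete_to E (B i) (C i)
          \<and> (\<forall>j\<in>{1,2,3::nat}. j \<noteq> i \<longrightarrow> anticomplete_to E (B i) (C j))"
    and jst: "jstar \<in> {1,2,3::nat}"
    and Fc: "complete_to E F (V - (B jstar \<union> C jstar \<union> F))"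
    and Fa: "anticomplete_to E F (B jstar \<union> C jstar)"
    using assms(2) unfolding five_basket_def Let_def
    apply (elim exE conjE)
    subgoal for A B C F istar jstar as
      apply (rule that[where A=A and B=B and C=C and F=F and istar=istar and jstar=jstar and as=as])
                          apply assumption+
      done
    done
  have D01: "A \<inter> B 1 = {}" using disj[rule_format, of 0 1] by simp
  have D02: "A \<inter> B 2 = {}" using disj[rule_format, of 0 2] by simp
  have D03: "A \<inter> B 3 = {}" using disj[rule_format, of 0 3] by simp
  have D04: "A \<inter> C 1 = {}" using disj[rule_format, of 0 4] by simp
  have D05: "A \<inter> C 2 = {}" using disj[rule_format, of 0 5] by simp
  have D06: "A \<inter> C 3 = {}" using disj[rule_format, of 0 6] by simp
  have D07: "A \<inter> F = {}" using disj[rule_format, of 0 7] by simp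
  have D12: "B 1 \<inter> B 2 = {}" using disj[rule_format, of 1 2] by simp
  have D13: "B 1 \<inter> B 3 = {}" using disj[rule_format, of 1 3] by simp
  have D14: "B 1 \<inter> C 1 = {}" using disj[rule_format, of 1 4] by simp
  have D15: "B 1 \<inter> C 2 = {}" using disj[rule_format, of 1 5] by simp
  have D16: "B 1 \<inter> C 3 = {}" using disj[rule_format, of 1 6] by simp
  have D17: "B 1 \<inter> F = {}" using disj[rule_format, of 1 7] by simp
  have D23: "B 2 \<inter> B 3 = {}" using disj[rule_format, of 2 3] by simp
  have D24: "B 2 \<inter> C 1 = {}" using disj[rule_format, of 2 4] by simp
  have D25: "B 2 \<inter> C 2 = {}" using disj[rule_format, of 2 5] by simp
  have D26: "B 2 \<inter> C 3 = {}" using disj[rule_format, of 2 6] by simp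
  have D27: "B 2 \<inter> F = {}" using disj[rule_format, of 2 7] by simp
  have D34: "B 3 \<inter> C 1 = {}" using disj[rule_format, of 3 4] by simp
  have D35: "B 3 \<inter> C 2 = {}" using disj[rule_format, of 3 5] by simp
  have D36: "B 3 \<inter> C 3 = {}" using disj[rule_format, of 3 6] by simp
  have D37: "B 3 \<inter> F = {}" using disj[rule_format, of 3 7] by simp
  have D45: "C 1 \<inter> C 2 = {}" using disj[rule_format, of 4 5] by simp
  have D46: "C 1 \<inter> C 3 = {}" using disj[rule_format, of 4 6] by simp
  have D47: "C 1 \<inter> F = {}" using disj[rule_format, of 4 7] by simp
  have D56: "C 2 \<inter> C 3 = {}" using disj[rule_format, of 5 6] by simp
  have D57: "C 2 \<inter> F = {}" using disj[rule_format, of 5 7] by simp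
  have D67: "C 3 \<inter> F = {}" using disj[rule_format, of 6 7] by simp
  note D = D01 D02 D03 D04 D05 D06 D07 D12 D13 D14 D15 D16 D17 D23 D24 D25 D26 D27 D34 D35 D36 D37 D45 D46 D47 D56 D57 D67
  have partV: "V = A \<union> B 1 \<union> B 2 \<union> B 3 \<union> C 1 \<union> C 2 \<union> C 3 \<union> F" using part by auto
  have AV: "A \<subseteq> V" and BV: "B 1 \<subseteq> V" "B 2 \<subseteq> V" "B 3 \<subseteq> V" and CV: "C 1 \<subseteq> V" "C 2 \<subseteq> V" "C 3 \<subseteq> V"
    and FV: "F \<subseteq> V" using partV by auto
  have X: "\<forall>x\<in>A. \<forall>y\<in>A. x \<noteq> y \<longrightarrow> E x y" "\<forall>x\<in>F. \<forall>y\<in>F. x \<noteq> y \<longrightarrow> E x y"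
    using Acl Fcl unfolding clique_def by auto
  have YB1: "\<forall>x\<in>B 1. \<forall>y\<in>B 1. x \<noteq> y \<longrightarrow> E x y" using BCn unfolding clique_def by auto
  have YC1: "\<forall>x\<in>C 1. \<forall>y\<in>C 1. x \<noteq> y \<longrightarrow> E x y" using BCn unfolding clique_def by auto
  have YAB1: "1 \<noteq> istar \<longrightarrow> (\<forall>x\<in>A. \<forall>y\<in>B 1. E x y \<and> E y x)"
  proof (intro impI ballI conjI)
    fix x y assume "1 \<noteq> istar" "x \<in> A" "y \<in> B 1"
    then have "E x y" using ABc unfolding complete_to_def by auto
    then show "E x y" "E y x" using symE by auto
  qed
  have YAC1: "\<forall>x\<in>A. \<forall>y\<in>C 1. \<not> E x y \<and> \<not> E y x"
  proof (intro ballI conjI)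
    fix x y assume "x \<in> A" "y \<in> C 1"
    then have "\<not> E x y" using ACa unfolding anticomplete_to_def by auto
    then show "\<not> E x y" "\<not> E y x" using symE by auto
  qed
  have YBC1: "\<forall>x\<in>B 1. \<forall>y\<in>C 1. E x y \<and> E y x"
  proof (intro ballI conjI)
    fix x y assume "x \<in> B 1" "y \<in> C 1"
    then have "E x y" using BCx unfolding complete_to_def by auto
    then show "E x y" "E y x" using symE by auto
  qed
  have YBB12: "\<forall>x\<in>B 1. \<forall>y\<in>B 2. \<not> E x y" using BBCC[rule_format, of 1 2] unfolding anticomplete_to_def by simp
  have YCC12: "\<forall>x\<in>C 1. \<forall>y\<in>C 2. E x y" using BBCC[rule_format, of 1 2] unfolding complete_to_def by simp
  have YBCn12: "\<forall>x\<in>B 1. \<forall>y\<in>C 2. \<not> E x y \<and> \<not> E y x"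
  proof (intro ballI conjI)
    fix x y assume "x \<in> B 1" "y \<in> C 2"
    then have "\<not> E x y" using BCx unfolding anticomplete_to_def by auto
    then show "\<not> E x y" "\<not> E y x" using symE by auto
  qed
  have YBB13: "\<forall>x\<in>B 1. \<forall>y\<in>B 3. \<not> E x y" using BBCC[rule_format, of 1 3] unfolding anticomplete_to_def by simp
  have YCC13: "\<forall>x\<in>C 1. \<forall>y\<in>C 3. E x y" using BBCC[rule_format, of 1 3] unfolding complete_to_def by simp
  have YBCn13: "\<forall>x\<in>B 1. \<forall>y\<in>C 3. \<not> E x y \<and> \<not> E y x"
  proof (intro ballI conjI)
    fix x y assume "x \<in> B 1" "y \<in> C 3"
    then have "\<not> E x y" using BCx unfolding anticomplete_to_def by auto
    then show "\<not> E x y" "\<not> E y x" using symE by auto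
  qed
  have YB2: "\<forall>x\<in>B 2. \<forall>y\<in>B 2. x \<noteq> y \<longrightarrow> E x y" using BCn unfolding clique_def by auto
  have YC2: "\<forall>x\<in>C 2. \<forall>y\<in>C 2. x \<noteq> y \<longrightarrow> E x y" using BCn unfolding clique_def by auto
  have YAB2: "2 \<noteq> istar \<longrightarrow> (\<forall>x\<in>A. \<forall>y\<in>B 2. E x y \<and> E y x)"
  proof (intro impI ballI conjI)
    fix x y assume "2 \<noteq> istar" "x \<in> A" "y \<in> B 2"
    then have "E x y" using ABc unfolding complete_to_def by auto
    then show "E x y" "E y x" using symE by auto
  qed
  have YAC2: "\<forall>x\<in>A. \<forall>y\<in>C 2. \<not> E x y \<and> \<not> E y x"
  proof (intro ballI conjI)
    fix x y assume "x \<in> A" "y \<in> C 2"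
    then have "\<not> E x y" using ACa unfolding anticomplete_to_def by auto
    then show "\<not> E x y" "\<not> E y x" using symE by auto
  qed
  have YBC2: "\<forall>x\<in>B 2. \<forall>y\<in>C 2. E x y \<and> E y x"
  proof (intro ballI conjI)
    fix x y assume "x \<in> B 2" "y \<in> C 2"
    then have "E x y" using BCx unfolding complete_to_def by auto
    then show "E x y" "E y x" using symE by auto
  qed
  have YBB21: "\<forall>x\<in>B 2. \<forall>y\<in>B 1. \<not> E x y" using BBCC[rule_format, of 2 1] unfolding anticomplete_to_def by simp
  have YCC21: "\<forall>x\<in>C 2. \<forall>y\<in>C 1. E x y" using BBCC[rule_format, of 2 1] unfolding complete_to_def by simp
  have YBCn21: "\<forall>x\<in>B 2. \<forall>y\<in>C 1. \<not> E x y \<and> \<not> E y x"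
  proof (intro ballI conjI)
    fix x y assume "x \<in> B 2" "y \<in> C 1"
    then have "\<not> E x y" using BCx unfolding anticomplete_to_def by auto
    then show "\<not> E x y" "\<not> E y x" using symE by auto
  qed
  have YBB23: "\<forall>x\<in>B 2. \<forall>y\<in>B 3. \<not> E x y" using BBCC[rule_format, of 2 3] unfolding anticomplete_to_def by simp
  have YCC23: "\<forall>x\<in>C 2. \<forall>y\<in>C 3. E x y" using BBCC[rule_format, of 2 3] unfolding complete_to_def by simp
  have YBCn23: "\<forall>x\<in>B 2. \<forall>y\<in>C 3. \<not> E x y \<and> \<not> E y x"
  proof (intro ballI conjI)
    fix x y assume "x \<in> B 2" "y \<in> C 3"
    then have "\<not> E x y" using BCx unfolding anticomplete_to_def by auto
    then show "\<not> E x y" "\<not> E y x" using symE by auto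
  qed
  have YB3: "\<forall>x\<in>B 3. \<forall>y\<in>B 3. x \<noteq> y \<longrightarrow> E x y" using BCn unfolding clique_def by auto
  have YC3: "\<forall>x\<in>C 3. \<forall>y\<in>C 3. x \<noteq> y \<longrightarrow> E x y" using BCn unfolding clique_def by auto
  have YAB3: "3 \<noteq> istar \<longrightarrow> (\<forall>x\<in>A. \<forall>y\<in>B 3. E x y \<and> E y x)"
  proof (intro impI ballI conjI)
    fix x y assume "3 \<noteq> istar" "x \<in> A" "y \<in> B 3"
    then have "E x y" using ABc unfolding complete_to_def by auto
    then show "E x y" "E y x" using symE by auto
  qed
  have YAC3: "\<forall>x\<in>A. \<forall>y\<in>C 3. \<not> E x y \<and> \<not> E y x"
  proof (intro ballI conjI)
    fix x y assume "x \<in> A" "y \<in> C 3"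
    then have "\<not> E x y" using ACa unfolding anticomplete_to_def by auto
    then show "\<not> E x y" "\<not> E y x" using symE by auto
  qed
  have YBC3: "\<forall>x\<in>B 3. \<forall>y\<in>C 3. E x y \<and> E y x"
  proof (intro ballI conjI)
    fix x y assume "x \<in> B 3" "y \<in> C 3"
    then have "E x y" using BCx unfolding complete_to_def by auto
    then show "E x y" "E y x" using symE by auto
  qed
  have YBB31: "\<forall>x\<in>B 3. \<forall>y\<in>B 1. \<not> E x y" using BBCC[rule_format, of 3 1] unfolding anticomplete_to_def by simp
  have YCC31: "\<forall>x\<in>C 3. \<forall>y\<in>C 1. E x y" using BBCC[rule_format, of 3 1] unfolding complete_to_def by simp
  have YBCn31: "\<forall>x\<in>B 3. \<forall>y\<in>C 1. \<not> E x y \<and> \<not> E y x"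
  proof (intro ballI conjI)
    fix x y assume "x \<in> B 3" "y \<in> C 1"
    then have "\<not> E x y" using BCx unfolding anticomplete_to_def by auto
    then show "\<not> E x y" "\<not> E y x" using symE by auto
  qed
  have YBB32: "\<forall>x\<in>B 3. \<forall>y\<in>B 2. \<not> E x y" using BBCC[rule_format, of 3 2] unfolding anticomplete_to_def by simp
  have YCC32: "\<forall>x\<in>C 3. \<forall>y\<in>C 2. E x y" using BBCC[rule_format, of 3 2] unfolding complete_to_def by simp
  have YBCn32: "\<forall>x\<in>B 3. \<forall>y\<in>C 2. \<not> E x y \<and> \<not> E y x"
  proof (intro ballI conjI)
    fix x y assume "x \<in> B 3" "y \<in> C 2"
    then have "\<not> E x y" using BCx unfolding anticomplete_to_def by auto
    then show "\<not> E x y" "\<not> E y x" using symE by auto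
  qed
  note Y = YB1 YC1 YAB1 YAC1 YBC1 YBB12 YCC12 YBCn12 YBB13 YCC13 YBCn13 YB2 YC2 YAB2 YAC2 YBC2 YBB21 YCC21 YBCn21 YBB23 YCC23 YBCn23 YB3 YC3 YAB3 YAC3 YBC3 YBB31 YCC31 YBCn31 YBB32 YCC32 YBCn32
  have Z1: "\<forall>f\<in>F. \<forall>x\<in>V - (B jstar \<union> C jstar \<union> F). E f x \<and> E x f"
  proof (intro ballI conjI)
    fix f x assume "f \<in> F" "x \<in> V - (B jstar \<union> C jstar \<union> F)"
    then have "E f x" using Fc unfolding complete_to_def by auto
    then show "E f x" "E x f" using symE by auto
  qed
  have Z2: "\<forall>f\<in>F. \<forall>x\<in>B jstar \<union> C jstar. \<not> E f x \<and> \<not> E x f"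
  proof (intro ballI conjI)
    fix f x assume "f \<in> F" "x \<in> B jstar \<union> C jstar"
    then have "\<not> E f x" using Fa unfolding anticomplete_to_def by auto
    then show "\<not> E f x" "\<not> E x f" using symE by auto
  qed
  note Z = Z1 Z2
  define cl where "cl u = (if u \<in> A then 0 else if u \<in> B 1 then 1 else if u \<in> B 2 then 2 else if u \<in> B 3 then 3
     else if u \<in> C 1 then 4 else if u \<in> C 2 then 5 else if u \<in> C 3 then (6::nat) else 7)" for u
  have mem: "u \<in> V \<Longrightarrow> (cl u = 0 \<and> u \<in> A) \<or> (cl u = 1 \<and> u \<in> B 1) \<or> (cl u = 2 \<and> u \<in> B 2) \<or> (cl u = 3 \<and> u \<in> B 3)
     \<or> (cl u = 4 \<and> u \<in> C 1) \<or> (cl u = 5 \<and> u \<in> C 2) \<or> (cl u = 6 \<and> u \<in> C 3) \<or> (cl u = 7 \<and> u \<in> F)" for u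
    using partV unfolding cl_def by auto
  have H1: "\<forall>u\<in>V. cl u < 8" unfolding cl_def by auto
  have DD: "\<And>x. x \<in> A \<Longrightarrow> x \<notin> B 1 \<and> x \<notin> B 2 \<and> x \<notin> B 3 \<and> x \<notin> C 1 \<and> x \<notin> C 2 \<and> x \<notin> C 3 \<and> x \<notin> F"
      "\<And>x. x \<in> B 1 \<Longrightarrow> x \<notin> B 2 \<and> x \<notin> B 3 \<and> x \<notin> C 1 \<and> x \<notin> C 2 \<and> x \<notin> C 3 \<and> x \<notin> F"
      "\<And>x. x \<in> B 2 \<Longrightarrow> x \<notin> B 1 \<and> x \<notin> B 3 \<and> x \<notin> C 1 \<and> x \<notin> C 2 \<and> x \<notin> C 3 \<and> x \<notin> F"
      "\<And>x. x \<in> B 3 \<Longrightarrow> x \<notin> B 1 \<and> x \<notin> B 2 \<and> x \<notin> C 1 \<and> x \<notin> C 2 \<and> x \<notin> C 3 \<and> x \<notin> F"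
      "\<And>x. x \<in> C 1 \<Longrightarrow> x \<notin> B 1 \<and> x \<notin> B 2 \<and> x \<notin> B 3 \<and> x \<notin> C 2 \<and> x \<notin> C 3 \<and> x \<notin> F"
      "\<And>x. x \<in> C 2 \<Longrightarrow> x \<notin> B 1 \<and> x \<notin> B 2 \<and> x \<notin> B 3 \<and> x \<notin> C 1 \<and> x \<notin> C 3 \<and> x \<notin> F"
      "\<And>x. x \<in> C 3 \<Longrightarrow> x \<notin> B 1 \<and> x \<notin> B 2 \<and> x \<notin> B 3 \<and> x \<notin> C 1 \<and> x \<notin> C 2 \<and> x \<notin> F"
    using D by auto
  have H2a: "\<forall>u\<in>V. \<forall>v\<in>V. \<forall>b. u \<noteq> v \<longrightarrow> cl u \<le> cl v \<longrightarrow> cadj istar jstar (cl u) (cl v) = Some b \<longrightarrow> E u v = b"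
  proof (intro ballI allI impI)
    fix u v b assume uV: "u \<in> V" and vV: "v \<in> V" and uv: "u \<noteq> v" and le: "cl u \<le> cl v" and cb: "cadj istar jstar (cl u) (cl v) = Some b"
    show "E u v = b"
      using mem[OF uV]
      apply (elim disjE conjE)
      subgoal using mem[OF vV]
        apply (elim disjE conjE)
        subgoal using cb uv X(1) by (auto simp: cadj_def cadj0_def split: if_splits)
        subgoal using cb uv YAB1 by (auto simp: cadj_def cadj0_def split: if_splits)
        subgoal using cb uv YAB2 by (auto simp: cadj_def cadj0_def split: if_splits)
        subgoal using cb uv YAB3 by (auto simp: cadj_def cadj0_def split: if_splits)
        subgoal using cb uv YAC1 by (auto simp: cadj_def cadj0_def split: if_splits)
        subgoal using cb uv YAC2 by (auto simp: cadj_def cadj0_def split: if_splits)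
        subgoal using cb uv YAC3 by (auto simp: cadj_def cadj0_def split: if_splits)
        subgoal using cb uv uV Z1 jst DD(1)[of u] by (auto simp: cadj_def cadj0_def split: if_splits)
        done
      subgoal using mem[OF vV]
        apply (elim disjE conjE)
        subgoal using le by simp
        subgoal using cb uv YB1 by (auto simp: cadj_def cadj0_def split: if_splits)
        subgoal using cb uv YBB12 by (auto simp: cadj_def cadj0_def split: if_splits)
        subgoal using cb uv YBB13 by (auto simp: cadj_def cadj0_def split: if_splits)
        subgoal using cb uv YBC1 by (auto simp: cadj_def cadj0_def split: if_splits)
        subgoal using cb uv YBCn12 by (auto simp: cadj_def cadj0_def split: if_splits)
        subgoal using cb uv YBCn13 by (auto simp: cadj_def cadj0_def split: if_splits)
        subgoal using cb uv uV Z1 Z2 jst DD(2)[of u] by (auto simp: cadj_def cadj0_def split: if_splits)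
        done
      subgoal using mem[OF vV]
        apply (elim disjE conjE)
        subgoal using le by simp
        subgoal using le by simp
        subgoal using cb uv YB2 by (auto simp: cadj_def cadj0_def split: if_splits)
        subgoal using cb uv YBB23 by (auto simp: cadj_def cadj0_def split: if_splits)
        subgoal using cb uv YBCn21 by (auto simp: cadj_def cadj0_def split: if_splits)
        subgoal using cb uv YBC2 by (auto simp: cadj_def cadj0_def split: if_splits)
        subgoal using cb uv YBCn23 by (auto simp: cadj_def cadj0_def split: if_splits)
        subgoal using cb uv uV Z1 Z2 jst DD(3)[of u] by (auto simp: cadj_def cadj0_def split: if_splits)
        done
      subgoal using mem[OF vV]
        apply (elim disjE conjE)
        subgoal using le by simp
        subgoal using le by simp
        subgoal using le by simp
        subgoal using cb uv YB3 by (auto simp: cadj_def cadj0_def split: if_splits)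
        subgoal using cb uv YBCn31 by (auto simp: cadj_def cadj0_def split: if_splits)
        subgoal using cb uv YBCn32 by (auto simp: cadj_def cadj0_def split: if_splits)
        subgoal using cb uv YBC3 by (auto simp: cadj_def cadj0_def split: if_splits)
        subgoal using cb uv uV Z1 Z2 jst DD(4)[of u] by (auto simp: cadj_def cadj0_def split: if_splits)
        done
      subgoal using mem[OF vV]
        apply (elim disjE conjE)
        subgoal using le by simp
        subgoal using le by simp
        subgoal using le by simp
        subgoal using le by simp
        subgoal using cb uv YC1 by (auto simp: cadj_def cadj0_def split: if_splits)
        subgoal using cb uv YCC12 by (auto simp: cadj_def cadj0_def split: if_splits)
        subgoal using cb uv YCC13 by (auto simp: cadj_def cadj0_def split: if_splits)
        subgoal using cb uv uV Z1 Z2 jst DD(5)[of u] by (auto simp: cadj_def cadj0_def split: if_splits)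
        done
      subgoal using mem[OF vV]
        apply (elim disjE conjE)
        subgoal using le by simp
        subgoal using le by simp
        subgoal using le by simp
        subgoal using le by simp
        subgoal using le by simp
        subgoal using cb uv YC2 by (auto simp: cadj_def cadj0_def split: if_splits)
        subgoal using cb uv YCC23 by (auto simp: cadj_def cadj0_def split: if_splits)
        subgoal using cb uv uV Z1 Z2 jst DD(6)[of u] by (auto simp: cadj_def cadj0_def split: if_splits)
        done
      subgoal using mem[OF vV]
        apply (elim disjE conjE)
        subgoal using le by simp
        subgoal using le by simp
        subgoal using le by simp
        subgoal using le by simp
        subgoal using le by simp
        subgoal using le by simp
        subgoal using cb uv YC3 by (auto simp: cadj_def cadj0_def split: if_splits)
        subgoal using cb uv uV Z1 Z2 jst DD(7)[of u] by (auto simp: cadj_def cadj0_def split: if_splits)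
        done
      subgoal using mem[OF vV]
        apply (elim disjE conjE)
        subgoal using le by simp
        subgoal using le by simp
        subgoal using le by simp
        subgoal using le by simp
        subgoal using le by simp
        subgoal using le by simp
        subgoal using le by simp
        subgoal using cb uv X(2) by (auto simp: cadj_def cadj0_def split: if_splits)
        done
      done
  qed
  have cadj_sym: "\<And>k l. cadj istar jstar k l = cadj istar jstar l k" unfolding cadj_def by auto
  have H2: "\<forall>u\<in>V. \<forall>v\<in>V. \<forall>b. u \<noteq> v \<longrightarrow> cadj istar jstar (cl u) (cl v) = Some b \<longrightarrow> E u v = b"
  proof (intro ballI allI impI)
    fix u v b assume uV: "u \<in> V" and vV: "v \<in> V" and uv: "u \<noteq> v" and cb: "cadj istar jstar (cl u) (cl v) = Some b"
    show "E u v = b"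
    proof (cases "cl u \<le> cl v")
      case True then show ?thesis using H2a uV vV uv cb by blast
    next
      case False
      then have "E v u = b" using H2a uV vV uv cb cadj_sym by (metis nat_le_linear)
      then show ?thesis using symE by blast
    qed
  qed
  have clA: "\<And>u. cl u = 0 \<Longrightarrow> u \<in> A" unfolding cl_def by (auto split: if_splits)
  have clB: "\<And>u. u \<in> V \<Longrightarrow> cl u = istar \<Longrightarrow> u \<in> B istar" using mem ist by fastforce
  have monoas: "\<forall>p\<le>q. nbhd E (as ! q) \<inter> B istar \<subseteq> nbhd E (as ! p) \<inter> B istar" if "q < length as" for q
    using that
  proof (induction q)
    case 0 then show ?case by simp
  next
    case (Suc q)
    have s: "nbhd E (as ! Suc q) \<inter> B istar \<subseteq> nbhd E (as ! q) \<inter> B istar" using asm Suc.prems by blast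
    show ?case
    proof (intro allI impI)
      fix p assume "p \<le> Suc q"
      then consider "p = Suc q" | "p \<le> q" by linarith
      then show "nbhd E (as ! Suc q) \<inter> B istar \<subseteq> nbhd E (as ! p) \<inter> B istar"
      proof cases
        case 1 then show ?thesis by simp
      next
        case 2 then show ?thesis using Suc.IH Suc.prems s by force
      qed
    qed
  qed
  have H3: "\<forall>a\<in>V. \<forall>a'\<in>V. \<forall>b\<in>V. \<forall>b'\<in>V. cl a = 0 \<longrightarrow> cl a' = 0 \<longrightarrow> cl b = istar \<longrightarrow> cl b' = istar \<longrightarrow>
               \<not> (E a b \<and> E a' b' \<and> \<not> E a b' \<and> \<not> E a' b)"
  proof (intro ballI impI notI)
    fix a a' b b' assume V4: "a \<in> V" "a' \<in> V" "b \<in> V" "b' \<in> V" and c4: "cl a = 0" "cl a' = 0" "cl b = istar" "cl b' = istar"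
      and e: "E a b \<and> E a' b' \<and> \<not> E a b' \<and> \<not> E a' b"
    have "a \<in> set as" "a' \<in> set as" using clA c4 asA by auto
    then obtain p q where p: "p < length as" "a = as ! p" and q: "q < length as" "a' = as ! q"
      by (metis in_set_conv_nth)
    have bB: "b \<in> B istar" "b' \<in> B istar" using clB V4 c4 by auto
    show False
    proof (cases "p \<le> q")
      case True
      then have "nbhd E a' \<inter> B istar \<subseteq> nbhd E a \<inter> B istar" using monoas[OF q(1)] p q by blast
      then show False using e bB unfolding nbhd_def by blast
    next
      case False
      then have "nbhd E a \<inter> B istar \<subseteq> nbhd E a' \<inter> B istar" using monoas[OF p(1)] p q by simp
      then show False using e bB unfolding nbhd_def by blast
    qed
  qed
  have R1: "\<not> has_induced twoP3_V twoP3_E V E"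
    unfolding twoP3_V_def by (rule no_induced_sym[OF ist jst H1 H2 H3 comp_2P3])
  have R2: "\<not> has_induced (cycle_V 4) (cycle_E 4) V E"
    unfolding cycle_V_def by (rule no_induced_sym[OF ist jst H1 H2 H3 comp_C4])
  have R3: "\<not> has_induced (cycle_V 6) (cycle_E 6) V E"
    unfolding cycle_V_def by (rule no_induced_sym[OF ist jst H1 H2 H3 comp_C6])
  have R4: "\<not> has_induced (cycle_V 7) (cycle_E 7) V E"
    unfolding cycle_V_def by (rule no_induced_sym[OF ist jst H1 H2 H3 comp_C7])
  have R5: "\<not> has_induced T0_V T0_E V E"
    unfolding T0_V_def by (rule no_induced_sym[OF ist jst H1 H2 H3 comp_T0])
  obtain b1 where b1: "b1 \<in> B 1" using BCn by auto
  obtain b2 where b2: "b2 \<in> B 2" using BCn by auto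
  obtain b3 where b3: "b3 \<in> B 3" using BCn by auto
  obtain c1 where c1: "c1 \<in> C 1" using BCn by auto
  obtain c2 where c2: "c2 \<in> C 2" using BCn by auto
  obtain c3 where c3: "c3 \<in> C 3" using BCn by auto
  define a0 where "a0 = as ! 0"
  have a0A: "a0 \<in> A" using An asA unfolding a0_def by (metis length_greater_0_conv nth_mem set_empty)
  have a0B: "\<And>x. x \<in> B istar \<Longrightarrow> E a0 x" using as0 unfolding a0_def nbhd_def by blast
  have a0Bk: "\<And>k x. k \<in> {1,2,3} \<Longrightarrow> x \<in> B k \<Longrightarrow> E a0 x \<and> E x a0"
  proof -
    fix k x assume k: "k \<in> {1,2,3::nat}" and x: "x \<in> B k"
    have "E a0 x"
    proof (cases "k = istar")
      case True then show ?thesis using a0B x by simp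
    next
      case False then show ?thesis using ABc k x a0A unfolding complete_to_def by blast
    qed
    then show "E a0 x \<and> E x a0" using symE by blast
  qed
  have inV: "a0 \<in> V" "b1 \<in> V" "b2 \<in> V" "b3 \<in> V" "c1 \<in> V" "c2 \<in> V" "c3 \<in> V" using a0A b1 b2 b3 c1 c2 c3 partV by auto
  have NEQ: "a0 \<noteq> b1" "b1 \<noteq> a0" "a0 \<noteq> b2" "b2 \<noteq> a0" "a0 \<noteq> b3" "b3 \<noteq> a0" "a0 \<noteq> c1" "c1 \<noteq> a0" "a0 \<noteq> c2" "c2 \<noteq> a0" "a0 \<noteq> c3" "c3 \<noteq> a0" "b1 \<noteq> b2" "b2 \<noteq> b1" "b1 \<noteq> b3" "b3 \<noteq> b1" "b1 \<noteq> c1" "c1 \<noteq> b1" "b1 \<noteq> c2" "c2 \<noteq> b1" "b1 \<noteq> c3" "c3 \<noteq> b1" "b2 \<noteq> b3" "b3 \<noteq> b2" "b2 \<noteq> c1" "c1 \<noteq> b2" "b2 \<noteq> c2" "c2 \<noteq> b2" "b2 \<noteq> c3" "c3 \<noteq> b2" "b3 \<noteq> c1" "c1 \<noteq> b3" "b3 \<noteq> c2" "c2 \<noteq> b3" "b3 \<noteq> c3" "c3 \<noteq> b3" "c1 \<noteq> c2" "c2 \<noteq> c1" "c1 \<noteq> c3" "c3 \<noteq> c1" "c2 \<noteq> c3" "c3 \<noteq> c2"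
    using DD(1)[OF a0A] DD(2)[OF b1] DD(3)[OF b2] DD(4)[OF b3] DD(5)[OF c1] DD(6)[OF c2] DD(7)[OF c3] a0A b1 b2 b3 c1 c2 c3 by blast+
  have EF: "E a0 b1" "E a0 b2" "E a0 b3" "E b1 a0" "E b2 a0" "E b3 a0" using a0Bk b1 b2 b3 by auto
  have EF2: "\<not> E a0 c1" "\<not> E a0 c2" "\<not> E a0 c3" "\<not> E c1 a0" "\<not> E c2 a0" "\<not> E c3 a0" using YAC1 YAC2 YAC3 a0A c1 c2 c3 by auto
  have EF3: "\<not> E b1 b2" "\<not> E b1 b3" "\<not> E b2 b1" "\<not> E b2 b3" "\<not> E b3 b1" "\<not> E b3 b2" using YBB12 YBB13 YBB21 YBB23 YBB31 YBB32 b1 b2 b3 by auto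
  have EF4: "E c1 c2" "E c1 c3" "E c2 c1" "E c2 c3" "E c3 c1" "E c3 c2" using YCC12 YCC13 YCC21 YCC23 YCC31 YCC32 c1 c2 c3 by auto
  have EF5: "E b1 c1" "E c1 b1" "\<not> E b1 c2" "\<not> E c2 b1" "\<not> E b1 c3" "\<not> E c3 b1" "\<not> E b2 c1" "\<not> E c1 b2" "E b2 c2" "E c2 b2" "\<not> E b2 c3" "\<not> E c3 b2" "\<not> E b3 c1" "\<not> E c1 b3" "\<not> E b3 c2" "\<not> E c2 b3" "E b3 c3" "E c3 b3" using YBC1 YBC2 YBC3 YBCn12 YBCn13 YBCn21 YBCn23 YBCn31 YBCn32 b1 b2 b3 c1 c2 c3 by auto
  have EF6: "\<not> E a0 a0" "\<not> E b1 b1" "\<not> E b2 b2" "\<not> E b3 b3" "\<not> E c1 c1" "\<not> E c2 c2" "\<not> E c3 c3" using irr by auto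
  have PENT: "has_induced pent3_V pent3_E V E"
  proof -
    define f where "f n = (if n = 0 then a0 else if n = 1 then b1 else if n = 2 then b2 else if n = 3 then b3
      else if n = 4 then c1 else if n = 5 then c2 else c3)" for n :: nat
    have pv: "pent3_V = {0,1,2,3,4,5,6}" unfolding pent3_V_def by auto
    have "inj_on f pent3_V" unfolding pv inj_on_def f_def using NEQ by auto
    moreover have "f ` pent3_V \<subseteq> V" unfolding pv f_def using inV by auto
    moreover have "\<forall>x\<in>pent3_V. \<forall>y\<in>pent3_V. E (f x) (f y) \<longleftrightarrow> pent3_E x y"
      unfolding pv pent3_E_def sym_edges_def by (simp add: f_def EF EF2 EF3 EF4 EF5 EF6)
    ultimately show ?thesis unfolding has_induced_def by blast
  qed
  define R where "R = {(a, b). a \<in> V \<and> b \<in> V \<and> complement V E a b}"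
  have step: "\<And>x y. x \<in> V \<Longrightarrow> y \<in> V \<Longrightarrow> x \<noteq> y \<Longrightarrow> \<not> E x y \<Longrightarrow> (x, y) \<in> R \<and> (y, x) \<in> R"
    unfolding R_def complement_def using symE by auto
  have two: "\<And>x c. (x, c) \<in> R \<and> (c, x) \<in> R \<Longrightarrow> (c, a0) \<in> R \<and> (a0, c) \<in> R \<Longrightarrow> (x, a0) \<in> R\<^sup>* \<and> (a0, x) \<in> R\<^sup>*"
    by (meson converse_rtrancl_into_rtrancl r_into_rtrancl)
  have ca0: "(c1, a0) \<in> R \<and> (a0, c1) \<in> R" "(c2, a0) \<in> R \<and> (a0, c2) \<in> R" "(c3, a0) \<in> R \<and> (a0, c3) \<in> R"
    using step inV NEQ EF2 by auto
  have reach: "(x, a0) \<in> R\<^sup>* \<and> (a0, x) \<in> R\<^sup>*" if xV: "x \<in> V" for x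
  proof -
    have "x \<in> A \<or> x \<in> B 1 \<or> x \<in> B 2 \<or> x \<in> B 3 \<or> x \<in> C 1 \<or> x \<in> C 2 \<or> x \<in> C 3 \<or> x \<in> F" using xV partV by auto
    then show ?thesis
    proof (elim disjE)
      assume x: "x \<in> A"
      have "(x, c1) \<in> R \<and> (c1, x) \<in> R" using step[OF xV inV(5)] x c1 DD(1)[OF x] YAC1 by blast
      then show ?thesis using two ca0 by blast
    next
      assume x: "x \<in> B 1"
      have "(x, c2) \<in> R \<and> (c2, x) \<in> R" using step[OF xV inV(6)] x c2 DD(2)[OF x] YBCn12 by blast
      then show ?thesis using two ca0 by blast
    next
      assume x: "x \<in> B 2"
      have "(x, c1) \<in> R \<and> (c1, x) \<in> R" using step[OF xV inV(5)] x c1 DD(3)[OF x] YBCn21 by blast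
      then show ?thesis using two ca0 by blast
    next
      assume x: "x \<in> B 3"
      have "(x, c1) \<in> R \<and> (c1, x) \<in> R" using step[OF xV inV(5)] x c1 DD(4)[OF x] YBCn31 by blast
      then show ?thesis using two ca0 by blast
    next
      assume x: "x \<in> C 1"
      show ?thesis using step[OF xV inV(1)] x a0A DD(1)[OF a0A] YAC1 by blast
    next
      assume x: "x \<in> C 2"
      show ?thesis using step[OF xV inV(1)] x a0A DD(1)[OF a0A] YAC2 by blast
    next
      assume x: "x \<in> C 3"
      show ?thesis using step[OF xV inV(1)] x a0A DD(1)[OF a0A] YAC3 by blast
    next
      assume x: "x \<in> F"
      have "jstar = 1 \<or> jstar = 2 \<or> jstar = 3" using jst by auto
      then show ?thesis
      proof (elim disjE)
        assume j: "jstar = 1"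
        have "(x, c1) \<in> R \<and> (c1, x) \<in> R" using step[OF xV inV(5)] x c1 DD(5)[OF c1] Z2 j by blast
        then show ?thesis using two ca0 by blast
      next
        assume j: "jstar = 2"
        have "(x, c2) \<in> R \<and> (c2, x) \<in> R" using step[OF xV inV(6)] x c2 DD(6)[OF c2] Z2 j by blast
        then show ?thesis using two ca0 by blast
      next
        assume j: "jstar = 3"
        have "(x, c3) \<in> R \<and> (c3, x) \<in> R" using step[OF xV inV(7)] x c3 DD(7)[OF c3] Z2 j by blast
        then show ?thesis using two ca0 by blast
      qed
    qed
  qed
  have ANTI: "anticonnected V E"
    unfolding anticonnected_def connected_graph_def R_def[symmetric]
  proof (intro ballI)
    fix x y assume "x \<in> V" "y \<in> V"
    then show "(x, y) \<in> R\<^sup>*" using reach by (meson rtrancl_trans)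
  qed
  have nsimp: "\<And>v x y. E v x \<Longrightarrow> E v y \<Longrightarrow> x \<noteq> y \<Longrightarrow> \<not> E x y \<Longrightarrow> \<not> simplicial V E v"
    unfolding simplicial_def by blast
  have nuniv: "\<And>v u. u \<in> V \<Longrightarrow> u \<noteq> v \<Longrightarrow> \<not> E v u \<Longrightarrow> \<not> universal V E v"
    unfolding universal_def by blast
  have SU: "\<forall>v\<in>V. \<not> simplicial V E v \<and> \<not> universal V E v"
  proof
    fix v assume vV: "v \<in> V"
    have "v \<in> A \<or> v \<in> B 1 \<or> v \<in> B 2 \<or> v \<in> B 3 \<or> v \<in> C 1 \<or> v \<in> C 2 \<or> v \<in> C 3 \<or> v \<in> F" using vV partV by auto
    then show "\<not> simplicial V E v \<and> \<not> universal V E v"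
    proof (elim disjE)
      assume v: "v \<in> A"
      have "istar = 1 \<or> istar = 2 \<or> istar = 3" using ist by auto
      then show ?thesis
      proof (elim disjE)
        assume ii: "istar = 1"
        have s1: "E v b2" using YAB2 v b2 ii by auto
        have s2: "E v b3" using YAB3 v b3 ii by auto
        have s3: "b2 \<noteq> b3" using NEQ by auto
        have s4: "\<not> E b2 b3" using EF3 by auto
        have s5: "c1 \<in> V" using inV by auto
        have s6: "c1 \<noteq> v" using c1 DD(1)[OF v] by auto
        have s7: "\<not> E v c1" using YAC1 v c1 by auto
        show ?thesis using nsimp[OF s1 s2 s3 s4] nuniv[OF s5 s6 s7] by blast
      next
        assume ii: "istar = 2"
        have s1: "E v b1" using YAB1 v b1 ii by auto
        have s2: "E v b3" using YAB3 v b3 ii by auto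
        have s3: "b1 \<noteq> b3" using NEQ by auto
        have s4: "\<not> E b1 b3" using EF3 by auto
        have s5: "c1 \<in> V" using inV by auto
        have s6: "c1 \<noteq> v" using c1 DD(1)[OF v] by auto
        have s7: "\<not> E v c1" using YAC1 v c1 by auto
        show ?thesis using nsimp[OF s1 s2 s3 s4] nuniv[OF s5 s6 s7] by blast
      next
        assume ii: "istar = 3"
        have s1: "E v b1" using YAB1 v b1 ii by auto
        have s2: "E v b2" using YAB2 v b2 ii by auto
        have s3: "b1 \<noteq> b2" using NEQ by auto
        have s4: "\<not> E b1 b2" using EF3 by auto
        have s5: "c1 \<in> V" using inV by auto
        have s6: "c1 \<noteq> v" using c1 DD(1)[OF v] by auto
        have s7: "\<not> E v c1" using YAC1 v c1 by auto
        show ?thesis using nsimp[OF s1 s2 s3 s4] nuniv[OF s5 s6 s7] by blast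
      qed
    next
      assume v: "v \<in> B 1"
      have s1: "E v c1" using YBC1 v c1 by auto
      have s2: "E v a0" using a0Bk[of 1 v] v by auto
      have s3: "c1 \<noteq> a0" using NEQ by auto
      have s4: "\<not> E c1 a0" using EF2 by auto
      have s5: "c2 \<in> V" using inV by auto
      have s6: "c2 \<noteq> v" using c2 DD(2)[OF v] by auto
      have s7: "\<not> E v c2" using YBCn12 v c2 by auto
      show ?thesis using nsimp[OF s1 s2 s3 s4] nuniv[OF s5 s6 s7] by blast
    next
      assume v: "v \<in> B 2"
      have s1: "E v c2" using YBC2 v c2 by auto
      have s2: "E v a0" using a0Bk[of 2 v] v by auto
      have s3: "c2 \<noteq> a0" using NEQ by auto
      have s4: "\<not> E c2 a0" using EF2 by auto
      have s5: "c1 \<in> V" using inV by auto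
      have s6: "c1 \<noteq> v" using c1 DD(3)[OF v] by auto
      have s7: "\<not> E v c1" using YBCn21 v c1 by auto
      show ?thesis using nsimp[OF s1 s2 s3 s4] nuniv[OF s5 s6 s7] by blast
    next
      assume v: "v \<in> B 3"
      have s1: "E v c3" using YBC3 v c3 by auto
      have s2: "E v a0" using a0Bk[of 3 v] v by auto
      have s3: "c3 \<noteq> a0" using NEQ by auto
      have s4: "\<not> E c3 a0" using EF2 by auto
      have s5: "c1 \<in> V" using inV by auto
      have s6: "c1 \<noteq> v" using c1 DD(4)[OF v] by auto
      have s7: "\<not> E v c1" using YBCn31 v c1 by auto
      show ?thesis using nsimp[OF s1 s2 s3 s4] nuniv[OF s5 s6 s7] by blast
    next
      assume v: "v \<in> C 1"
      have s1: "E v b1" using YBC1 v b1 by auto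
      have s2: "E v c2" using YCC12 v c2 by auto
      have s3: "b1 \<noteq> c2" using NEQ by auto
      have s4: "\<not> E b1 c2" using EF5 by auto
      have s5: "a0 \<in> V" using inV by auto
      have s6: "a0 \<noteq> v" using a0A DD(1)[OF a0A] v by auto
      have s7: "\<not> E v a0" using YAC1 v a0A by auto
      show ?thesis using nsimp[OF s1 s2 s3 s4] nuniv[OF s5 s6 s7] by blast
    next
      assume v: "v \<in> C 2"
      have s1: "E v b2" using YBC2 v b2 by auto
      have s2: "E v c1" using YCC21 v c1 by auto
      have s3: "b2 \<noteq> c1" using NEQ by auto
      have s4: "\<not> E b2 c1" using EF5 by auto
      have s5: "a0 \<in> V" using inV by auto
      have s6: "a0 \<noteq> v" using a0A DD(1)[OF a0A] v by auto
      have s7: "\<not> E v a0" using YAC2 v a0A by auto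
      show ?thesis using nsimp[OF s1 s2 s3 s4] nuniv[OF s5 s6 s7] by blast
    next
      assume v: "v \<in> C 3"
      have s1: "E v b3" using YBC3 v b3 by auto
      have s2: "E v c1" using YCC31 v c1 by auto
      have s3: "b3 \<noteq> c1" using NEQ by auto
      have s4: "\<not> E b3 c1" using EF5 by auto
      have s5: "a0 \<in> V" using inV by auto
      have s6: "a0 \<noteq> v" using a0A DD(1)[OF a0A] v by auto
      have s7: "\<not> E v a0" using YAC3 v a0A by auto
      show ?thesis using nsimp[OF s1 s2 s3 s4] nuniv[OF s5 s6 s7] by blast
    next
      assume v: "v \<in> F"
      have a0n: "a0 \<in> V - (B jstar \<union> C jstar \<union> F)" using a0A inV DD(1)[OF a0A] jst by auto
      have "jstar = 1 \<or> jstar = 2 \<or> jstar = 3" using jst by auto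
      then show ?thesis
      proof (elim disjE)
        assume j: "jstar = 1"
        have cn: "c2 \<in> V - (B jstar \<union> C jstar \<union> F)" using c2 inV DD(6)[OF c2] j by auto
        have s1: "E v a0" using Z1 a0n v by auto
        have s2: "E v c2" using Z1 cn v by auto
        have s3: "a0 \<noteq> c2" using NEQ by auto
        have s4: "\<not> E a0 c2" using EF2 by auto
        have s5: "b1 \<in> V" using inV by auto
        have s6: "b1 \<noteq> v" using b1 DD(2)[OF b1] v by auto
        have s7: "\<not> E v b1" using Z2 v b1 j by auto
        show ?thesis using nsimp[OF s1 s2 s3 s4] nuniv[OF s5 s6 s7] by blast
      next
        assume j: "jstar = 2"
        have cn: "c1 \<in> V - (B jstar \<union> C jstar \<union> F)" using c1 inV DD(5)[OF c1] j by auto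
        have s1: "E v a0" using Z1 a0n v by auto
        have s2: "E v c1" using Z1 cn v by auto
        have s3: "a0 \<noteq> c1" using NEQ by auto
        have s4: "\<not> E a0 c1" using EF2 by auto
        have s5: "b2 \<in> V" using inV by auto
        have s6: "b2 \<noteq> v" using b2 DD(3)[OF b2] v by auto
        have s7: "\<not> E v b2" using Z2 v b2 j by auto
        show ?thesis using nsimp[OF s1 s2 s3 s4] nuniv[OF s5 s6 s7] by blast
      next
        assume j: "jstar = 3"
        have cn: "c1 \<in> V - (B jstar \<union> C jstar \<union> F)" using c1 inV DD(5)[OF c1] j by auto
        have s1: "E v a0" using Z1 a0n v by auto
        have s2: "E v c1" using Z1 cn v by auto
        have s3: "a0 \<noteq> c1" using NEQ by auto
        have s4: "\<not> E a0 c1" using EF2 by auto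
        have s5: "b3 \<in> V" using inV by auto
        have s6: "b3 \<noteq> v" using b3 DD(4)[OF b3] v by auto
        have s7: "\<not> E v b3" using Z2 v b3 j by auto
        show ?thesis using nsimp[OF s1 s2 s3 s4] nuniv[OF s5 s6 s7] by blast
      qed
    qed
  qed
  show ?thesis using R1 R2 R3 R4 R5 PENT ANTI SU by blast
qed

end
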